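(* Let $\phi:[0,\infty)\to\mathbb R$ be convex with $\phi(1)=0$, and let $E$ be the associated entropy. For every $\mathbf p\in\Delta^N$ with $\langle\mathbf u^{(1)},\mathbf p\rangle>0$ one has $E(\mathbf M\mathbf p)\le E(\mathbf p)$. Moreover, if $\phi$ is strictly convex, then $E(\mathbf M\mathbf p)=E(\mathbf p)$ if and only if $\mathbf p$ belongs to the quasi-stationary set $\mathcal Q$.
   Context: Fix an integer $N\ge 2$ and a type selection vector $(\mathsf s_0,\dots,\mathsf s_N)$ with $\mathsf s_0=0$, $\mathsf s_N=1$ and $0<\mathsf s_i<1$ for $1\le i\le N-1$. The Moran matrix $\mathbf M=(M_{ij})_{i,j=0}^N$ is defined by $M_{ij}=0$ if $|i-j|>1$, $M_{i+1,i}=\frac{N-i}{N}\mathsf s_i$, $M_{i-1,i}=\frac{i}{N}(1-\mathsf s_i)$, $M_{ii}=1-M_{i+1,i}-M_{i-1,i}$ (column-stochastic; $M_{ij}$ is the probability of going from state $j$ to state $i$; probability vectors evolve by $\mathbf p\mapsto\mathbf M\mathbf p$). The core matrix $\widetilde{\mathbf M}=(M_{ij})_{i,j=1}^{N-1}$ has a simple Perron eigenvalue $\mu_1>0$ with positive left/right eigenvectors $\widetilde{\mathbf u}^{(1)},\widetilde{\mathbf v}^{(1)}\in\mathbb R^{N-1}$, normalized by $\sum_i v^{(1)}_i=1$, $\sum_i u^{(1)}_iv^{(1)}_i=1$. Let $\Delta^N=\{\mathbf x\in\mathbb R^{N+1}:x_i\ge0,\ \sum_{i=0}^Nx_i=1\}$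 and, for $\mathbf p=(p_0,\dots,p_N)$, $\langle\mathbf u^{(1)},\mathbf p\rangle:=\sum_{i=1}^{N-1}u^{(1)}_ip_i$. For $\mathbf p\in\Delta^N$ with $\langle\mathbf u^{(1)},\mathbf p\rangle>0$ the entropy is \[ E(\mathbf p)=\sum_{i=1}^{N-1}\phi\!\left(\frac{p_i}{v^{(1)}_i\langle\mathbf u^{(1)},\mathbf p\rangle}\right)v^{(1)}_iu^{(1)}_i . \] Let $\hat{\mathbf v}^{(1)}=(0,v^{(1)}_1,\dots,v^{(1)}_{N-1},0)\in\mathbb R^{N+1}$ and $\mathbf e_0,\mathbf e_N$ the standard basis vectors of $\mathbb R^{N+1}$ at positions $0$ and $N$. The quasi-stationary set is $\mathcal Q=\{\alpha\mathbf e_0+\lambda\hat{\mathbf v}^{(1)}+\beta\mathbf e_N:\ \alpha,\beta,\lambda\ge0,\ \alpha+\beta+\lambda=1\}$. *)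

theory Defs
  imports "HOL-Analysis.Analysis"
begin

definition strictly_convex_on :: "real set \<Rightarrow> (real \<Rightarrow> real) \<Rightarrow> bool" where
  "strictly_convex_on S f \<longleftrightarrow> convex S \<and>
     (\<forall>x\<in>S. \<forall>y\<in>S. \<forall>t. x \<noteq> y \<and> 0 < t \<and> t < 1 \<longrightarrow>
        f ((1 - t) * x + t * y) < (1 - t) * f x + t * f y)"

text \<open>Moran matrix entries M i j (probability of going from state j to state i),
  indices 0..N; vectors are functions nat => real, relevant on 0..N.\<close>
definition moran_M :: "nat \<Rightarrow> (nat \<Rightarrow> real) \<Rightarrow> nat \<Rightarrow> nat \<Rightarrow> real" where
  "moran_M N s i j =
     (if i = j + 1 then (real N - real j) / real N * s j
      else if j = i + 1 then real j / real N * (1 - s j)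
      else if i = j then 1 - (real N - real j) / real N * s j - real j / real N * (1 - s j)
      else 0)"

definition moran_apply :: "nat \<Rightarrow> (nat \<Rightarrow> real) \<Rightarrow> (nat \<Rightarrow> real) \<Rightarrow> nat \<Rightarrow> real" where
  "moran_apply N s p = (\<lambda>i. \<Sum>j\<in>{0..N}. moran_M N s i j * p j)"

definition prob_simplex :: "nat \<Rightarrow> (nat \<Rightarrow> real) set" where
  "prob_simplex N = {x. (\<forall>i\<in>{0..N}. 0 \<le> x i) \<and> (\<Sum>i\<in>{0..N}. x i) = 1}"

definition core_ip :: "nat \<Rightarrow> (nat \<Rightarrow> real) \<Rightarrow> (nat \<Rightarrow> real) \<Rightarrow> real" where
  "core_ip N u p = (\<Sum>i\<in>{1..N-1}. u i * p i)"

definition entropy ::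
  "(real \<Rightarrow> real) \<Rightarrow> nat \<Rightarrow> (nat \<Rightarrow> real) \<Rightarrow> (nat \<Rightarrow> real) \<Rightarrow> (nat \<Rightarrow> real) \<Rightarrow> real" where
  "entropy \<phi> N u v p =
     (\<Sum>i\<in>{1..N-1}. \<phi> (p i / (v i * core_ip N u p)) * v i * u i)"

definition vhat :: "nat \<Rightarrow> (nat \<Rightarrow> real) \<Rightarrow> nat \<Rightarrow> real" where
  "vhat N v i = (if 1 \<le> i \<and> i \<le> N - 1 then v i else 0)"

definition quasi_stationary :: "nat \<Rightarrow> (nat \<Rightarrow> real) \<Rightarrow> (nat \<Rightarrow> real) set" where
  "quasi_stationary N v =
     {x. \<exists>\<alpha> \<beta> lam. \<alpha> \<ge> 0 \<and> \<beta> \<ge> 0 \<and> lam \<ge> 0 \<and> \<alpha> + \<beta> + lam = 1 \<and>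
        (\<forall>i\<in>{0..N}. x i = (if i = 0 then \<alpha> else 0) + lam * vhat N v i
                          + (if i = N then \<beta> else 0))}"

end

theory Submission imports Defs begin

lemma jensen_real:
  fixes a y :: "'a \<Rightarrow> real"
  assumes "finite S" "S \<noteq> {}" "convex_on {0..} f" "(\<Sum>i\<in>S. a i) = 1"
    "\<And>i. i \<in> S \<Longrightarrow> a i \<ge> 0" "\<And>i. i \<in> S \<Longrightarrow> y i \<ge> 0"
  shows "f (\<Sum>i\<in>S. a i * y i) \<le> (\<Sum>i\<in>S. a i * f (y i))"
  using convex_on_sum[OF assms(1,2,3,4), of y] assms(5,6) by simp

lemma strict_jensen:
  fixes a x :: "'a \<Rightarrow> real"
  assumes fin: "finite A" and kA: "k \<in> A" and ak: "a k > 0"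
    and suma: "(\<Sum>j\<in>A. a j) = 1" and anon: "\<And>j. j \<in> A \<Longrightarrow> a j \<ge> 0"
    and xnon: "\<And>j. j \<in> A \<Longrightarrow> x j \<ge> 0"
    and cvx: "convex_on {0..} f" and scvx: "strictly_convex_on {0..} f"
    and eq: "f (\<Sum>j\<in>A. a j * x j) = (\<Sum>j\<in>A. a j * f (x j))"
  shows "x k = (\<Sum>j\<in>A. a j * x j)"
proof (rule ccontr)
  assume ne: "x k \<noteq> (\<Sum>j\<in>A. a j * x j)"
  define B where "B = A - {k}"
  have finB: "finite B" using fin B_def by simp
  have split: "\<And>g. (\<Sum>j\<in>A. g j) = g k + (\<Sum>j\<in>B. g j)"
    unfolding B_def using fin kA by (simp add: sum.remove)
  have sumB: "(\<Sum>j\<in>B. a j) = 1 - a k" using split[of a] suma by simp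
  show False
  proof (cases "a k = 1")
    case True
    then have "(\<Sum>j\<in>B. a j) = 0" using sumB by simp
    then have "\<forall>j\<in>B. a j = 0" using sum_nonneg_eq_0_iff[OF finB] anon B_def by auto
    then have "(\<Sum>j\<in>B. a j * x j) = 0" by simp
    then show False using ne split[of "\<lambda>j. a j * x j"] True by simp
  next
    case False
    define b where "b = 1 - a k"
    have ak1: "a k \<le> 1"
    proof -
      have "(\<Sum>j\<in>B. a j) \<ge> 0" using anon B_def by (auto intro: sum_nonneg)
      then show ?thesis using sumB by simp
    qed
    have bpos: "b > 0" using False ak1 b_def by simp
    have b1: "b < 1" using ak b_def by simp
    have Bne: "B \<noteq> {}" using sumB bpos b_def by auto
    define z where "z = (\<Sum>j\<in>B. (a j / b) * x j)"
    have znon: "z \<ge> 0" unfolding z_def using anon xnon B_def bpos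
      by (auto intro!: sum_nonneg)
    have bz: "b * z = (\<Sum>j\<in>B. a j * x j)" unfolding z_def sum_distrib_left using bpos
      by (auto intro!: sum.cong)
    have yeq: "(\<Sum>j\<in>A. a j * x j) = (1 - b) * x k + b * z"
      using split[of "\<lambda>j. a j * x j"] bz b_def by simp
    have xz: "x k \<noteq> z" using ne yeq by (auto simp: algebra_simps)
    have "f ((1 - b) * x k + b * z) < (1 - b) * f (x k) + b * f z"
      using scvx xz bpos b1 xnon[OF kA] znon unfolding strictly_convex_on_def by auto
    moreover have "f z \<le> (\<Sum>j\<in>B. (a j / b) * f (x j))"
      unfolding z_def
    proof (rule jensen_real[OF finB Bne cvx])
      show "(\<Sum>i\<in>B. a i / b) = 1" using sumB b_def bpos by (simp add: sum_divide_distrib[symmetric])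
    qed (use anon xnon B_def bpos in auto)
    moreover have "b * (\<Sum>j\<in>B. (a j / b) * f (x j)) = (\<Sum>j\<in>B. a j * f (x j))"
      unfolding sum_distrib_left using bpos by (auto intro!: sum.cong)
    ultimately have "f (\<Sum>j\<in>A. a j * x j) < (\<Sum>j\<in>A. a j * f (x j))"
      using yeq split[of "\<lambda>j. a j * f (x j)"] b_def bpos
      by (smt (verit) mult_left_mono)
    then show False using eq by simp
  qed
qed
theorem lemma3:
  fixes N :: nat and s u v p :: "nat \<Rightarrow> real" and \<mu> :: real and \<phi> :: "real \<Rightarrow> real"
  assumes N2: "N \<ge> 2"
    and s0: "s 0 = 0" and sN: "s N = 1"
    and s_mid: "\<forall>i\<in>{1..N-1}. 0 < s i \<and> s i < 1"
    and mu_pos: "\<mu> > 0"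
    and v_pos: "\<forall>i\<in>{1..N-1}. v i > 0"
    and u_pos: "\<forall>i\<in>{1..N-1}. u i > 0"
    and v_eig: "\<forall>i\<in>{1..N-1}. (\<Sum>j\<in>{1..N-1}. moran_M N s i j * v j) = \<mu> * v i"
    and u_eig: "\<forall>j\<in>{1..N-1}. (\<Sum>i\<in>{1..N-1}. u i * moran_M N s i j) = \<mu> * u j"
    and v_norm: "(\<Sum>i\<in>{1..N-1}. v i) = 1"
    and uv_norm: "(\<Sum>i\<in>{1..N-1}. u i * v i) = 1"
    and phi_convex: "convex_on {0..} \<phi>"
    and phi1: "\<phi> 1 = 0"
    and p_simplex: "p \<in> prob_simplex N"
    and p_pos: "core_ip N u p > 0"
  shows "entropy \<phi> N u v (moran_apply N s p) \<le> entropy \<phi> N u v p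
       \<and> (strictly_convex_on {0..} \<phi> \<longrightarrow>
            (entropy \<phi> N u v (moran_apply N s p) = entropy \<phi> N u v p
               \<longleftrightarrow> p \<in> quasi_stationary N v))"
proof -
  define C where "C = {1..N-1}"
  define c where "c = core_ip N u p"
  define q where "q = moran_apply N s p"
  define M where "M = moran_M N s"
  have finC: "finite C" unfolding C_def by simp
  have Cne: "C \<noteq> {}" unfolding C_def using N2 by auto
  have Npos: "real N > 0" using N2 by simp
  have cpos: "c > 0" using p_pos c_def by simp
  have pnon: "\<And>i. i \<le> N \<Longrightarrow> p i \<ge> 0" using p_simplex unfolding prob_simplex_def by auto
  have psum: "(\<Sum>i\<in>{0..N}. p i) = 1" using p_simplex unfolding prob_simplex_def by auto
  have vC: "\<And>i. i \<in> C \<Longrightarrow> v i > 0" using v_pos C_def by auto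
  have uC: "\<And>i. i \<in> C \<Longrightarrow> u i > 0" using u_pos C_def by auto
  have sC: "\<And>i. i \<in> C \<Longrightarrow> 0 < s i \<and> s i < 1" using s_mid C_def by auto
  have M_nonneg: "M i j \<ge> 0" if j: "j \<in> C" for i j
  proof -
    have jN: "real j < real N" "real j \<ge> 1" using j N2 C_def by auto
    have s: "0 < s j" "s j < 1" using sC[OF j] by auto
    have a: "(real N - real j) / real N * s j \<le> (real N - real j) / real N"
      using jN s Npos by (intro mult_left_le) auto
    have b: "real j / real N * (1 - s j) \<le> real j / real N"
      using jN s Npos by (intro mult_left_le) auto
    have "(real N - real j) / real N + real j / real N = 1" using Npos by (simp add: field_simps)
    then show ?thesis unfolding M_def moran_M_def using a b jN s Npos
      by (auto intro!: mult_nonneg_nonneg divide_nonneg_pos)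
  qed
  have M_diag: "M i i > 0" if i: "i \<in> C" for i
  proof -
    have jN: "real i < real N" "real i \<ge> 1" using i N2 C_def by auto
    have s: "0 < s i" "s i < 1" using sC[OF i] by auto
    have a: "(real N - real i) / real N * s i < (real N - real i) / real N"
    proof -
      have "(real N - real i) / real N > 0" using jN Npos by simp
      from mult_strict_left_mono[OF s(2) this] show ?thesis by simp
    qed
    have b: "real i / real N * (1 - s i) \<le> real i / real N"
      using jN s Npos by (intro mult_left_le) auto
    have "(real N - real i) / real N + real i / real N = 1" using Npos by (simp add: field_simps)
    then show ?thesis unfolding M_def moran_M_def using a b by auto
  qed
  have M_sup: "M i (i+1) > 0" if i: "i \<in> C" and i1: "i + 1 \<in> C" for i
  proof -
    have s: "0 < s (i+1)" "s (i+1) < 1" using sC[OF i1] by auto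
    then show ?thesis unfolding M_def moran_M_def using Npos by auto
  qed
  have M0: "M i 0 = 0" if "i \<in> C" for i
    using that s0 unfolding M_def moran_M_def C_def by auto
  have MN: "M i N = 0" if "i \<in> C" for i
    using that sN N2 unfolding M_def moran_M_def C_def by auto
  have dom: "{0..N} = insert 0 (insert N C)" unfolding C_def using N2 by auto
  have q_core: "q i = (\<Sum>j\<in>C. M i j * p j)" if i: "i \<in> C" for i
  proof -
    have "0 \<notin> insert N C" "N \<notin> C" unfolding C_def using N2 by auto
    then show ?thesis unfolding q_def moran_apply_def M_def[symmetric] dom
      using finC M0[OF i] MN[OF i] by simp
  qed
  have p_ip: "c = (\<Sum>j\<in>C. u j * p j)" unfolding c_def core_ip_def C_def ..
  have cq: "core_ip N u q = \<mu> * c"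
  proof -
    have "core_ip N u q = (\<Sum>i\<in>C. u i * (\<Sum>j\<in>C. M i j * p j))"
      unfolding core_ip_def C_def[symmetric] using q_core by (auto intro!: sum.cong)
    also have "\<dots> = (\<Sum>j\<in>C. (\<Sum>i\<in>C. u i * M i j) * p j)"
      unfolding sum_distrib_left sum_distrib_right
      by (subst sum.swap) (simp add: mult.assoc)
    also have "\<dots> = (\<Sum>j\<in>C. \<mu> * u j * p j)"
      using u_eig unfolding C_def M_def by (auto intro!: sum.cong)
    also have "\<dots> = \<mu> * c" unfolding p_ip by (simp add: sum_distrib_left mult.assoc)
    finally show ?thesis .
  qed
  define x where "x j = p j / (v j * c)" for j
  define y where "y i = q i / (v i * (\<mu> * c))" for i
  define a where "a i j = M i j * v j / (\<mu> * v i)" for i j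
  have x_non: "x j \<ge> 0" if "j \<in> C" for j
    using that pnon[of j] vC[OF that] cpos unfolding x_def C_def by auto
  have a_non: "a i j \<ge> 0" if "i \<in> C" "j \<in> C" for i j
    using M_nonneg[OF that(2)] vC[OF that(1)] vC[OF that(2)] mu_pos unfolding a_def by auto
  have a_sum: "(\<Sum>j\<in>C. a i j) = 1" if i: "i \<in> C" for i
  proof -
    have "(\<Sum>j\<in>C. a i j) = (\<Sum>j\<in>C. M i j * v j) / (\<mu> * v i)"
      unfolding a_def by (simp add: sum_divide_distrib)
    also have "\<dots> = 1" using v_eig i vC[OF i] mu_pos unfolding C_def M_def by auto
    finally show ?thesis .
  qed
  have y_eq: "y i = (\<Sum>j\<in>C. a i j * x j)" if i: "i \<in> C" for i
  proof -
    have "y i = (\<Sum>j\<in>C. M i j * p j / (v i * (\<mu> * c)))"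
      unfolding y_def q_core[OF i] by (simp add: sum_divide_distrib)
    also have "\<dots> = (\<Sum>j\<in>C. a i j * x j)"
      unfolding a_def x_def
    proof (intro sum.cong refl)
      fix j assume j: "j \<in> C"
      show "M i j * p j / (v i * (\<mu> * c)) = M i j * v j / (\<mu> * v i) * (p j / (v j * c))"
        using cpos mu_pos vC[OF i] vC[OF j] by (simp add: field_simps)
    qed
    finally show ?thesis .
  qed
  have Eq: "entropy \<phi> N u v q = (\<Sum>i\<in>C. \<phi> (y i) * v i * u i)"
    unfolding entropy_def cq y_def C_def ..
  have Ep: "entropy \<phi> N u v p = (\<Sum>i\<in>C. \<phi> (x i) * v i * u i)"
    unfolding entropy_def c_def[symmetric] x_def C_def ..
  define T where "T i = (\<Sum>j\<in>C. a i j * \<phi> (x j))" for i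
  have jen: "\<phi> (y i) \<le> T i" if i: "i \<in> C" for i
    unfolding y_eq[OF i] T_def
    by (rule jensen_real[OF finC Cne phi_convex a_sum[OF i]]) (use a_non[OF i] x_non in auto)
  have swap: "(\<Sum>i\<in>C. T i * v i * u i) = entropy \<phi> N u v p"
  proof -
    have "(\<Sum>i\<in>C. T i * v i * u i) = (\<Sum>j\<in>C. \<phi> (x j) * (\<Sum>i\<in>C. a i j * v i * u i))"
      unfolding T_def sum_distrib_right sum_distrib_left
      by (subst sum.swap) (auto intro!: sum.cong simp: algebra_simps)
    also have "\<dots> = (\<Sum>j\<in>C. \<phi> (x j) * v j * u j)"
    proof (intro sum.cong refl)
      fix j assume j: "j \<in> C"
      have "(\<Sum>i\<in>C. a i j * v i * u i) = (\<Sum>i\<in>C. u i * M i j) * v j / \<mu>"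
        unfolding a_def sum_distrib_right sum_divide_distrib
      proof (intro sum.cong refl)
        fix i assume i: "i \<in> C"
        show "M i j * v j / (\<mu> * v i) * v i * u i = u i * M i j * v j / \<mu>"
          using mu_pos vC[OF i] by (simp add: field_simps)
      qed
      also have "\<dots> = v j * u j" using u_eig j mu_pos unfolding C_def M_def by auto
      finally show "\<phi> (x j) * (\<Sum>i\<in>C. a i j * v i * u i) = \<phi> (x j) * v j * u j" by simp
    qed
    finally show ?thesis using Ep by simp
  qed
  have le_terms: "\<phi> (y i) * v i * u i \<le> T i * v i * u i" if i: "i \<in> C" for i
    using jen[OF i] vC[OF i] uC[OF i] by (intro mult_right_mono) auto
  have ineq: "entropy \<phi> N u v q \<le> entropy \<phi> N u v p"
    unfolding Eq swap[symmetric] using le_terms by (rule sum_mono)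
  show ?thesis
  proof (intro conjI impI)
    show "entropy \<phi> N u v (moran_apply N s p) \<le> entropy \<phi> N u v p" using ineq q_def by simp
  next
    assume scvx: "strictly_convex_on {0..} \<phi>"
    show "entropy \<phi> N u v (moran_apply N s p) = entropy \<phi> N u v p \<longleftrightarrow> p \<in> quasi_stationary N v"
    proof
      assume EE: "entropy \<phi> N u v (moran_apply N s p) = entropy \<phi> N u v p"
      have E: "entropy \<phi> N u v q = entropy \<phi> N u v p" using EE unfolding q_def .
      have "(\<Sum>i\<in>C. T i * v i * u i - \<phi> (y i) * v i * u i)
          = (\<Sum>i\<in>C. T i * v i * u i) - (\<Sum>i\<in>C. \<phi> (y i) * v i * u i)"
        by (rule sum_subtractf)
      also have "\<dots> = 0" unfolding swap Eq[symmetric] E by simp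
      finally have S0: "(\<Sum>i\<in>C. T i * v i * u i - \<phi> (y i) * v i * u i) = 0" .
      have nn: "\<And>i. i \<in> C \<Longrightarrow> 0 \<le> T i * v i * u i - \<phi> (y i) * v i * u i"
        using le_terms by simp
      have allz: "\<forall>i\<in>C. T i * v i * u i - \<phi> (y i) * v i * u i = 0"
        using iffD1[OF sum_nonneg_eq_0_iff[OF finC nn] S0] .
      have eqi: "\<phi> (y i) = T i" if "i \<in> C" for i
      proof -
        have "T i * v i * u i - \<phi> (y i) * v i * u i = 0" using allz that by blast
        then have "(T i - \<phi> (y i)) * (v i * u i) = 0" by (simp add: left_diff_distrib mult.assoc)
        then show ?thesis using vC[OF that] uC[OF that] by simp
      qed
      have xy: "x k = y i" if i: "i \<in> C" and k: "k \<in> C" and ak: "a i k > 0" for i k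
      proof -
        have e: "\<phi> (\<Sum>j\<in>C. a i j * x j) = (\<Sum>j\<in>C. a i j * \<phi> (x j))"
          using eqi[OF i] y_eq[OF i] unfolding T_def by simp
        have "x k = (\<Sum>j\<in>C. a i j * x j)"
          by (rule strict_jensen[OF finC k ak a_sum[OF i] a_non[OF i] x_non phi_convex scvx e])
        then show ?thesis using y_eq[OF i] by simp
      qed
      have step: "x (i+1) = x i" if i: "i \<in> C" and i1: "i + 1 \<in> C" for i
      proof -
        have "a i i > 0" using M_diag[OF i] vC[OF i] mu_pos unfolding a_def by simp
        moreover have "a i (i+1) > 0" using M_sup[OF i i1] vC[OF i] vC[OF i1] mu_pos unfolding a_def by simp
        ultimately show ?thesis using xy[OF i i] xy[OF i i1] by simp
      qed
      have allx: "\<forall>j. 1 \<le> j \<longrightarrow> j \<le> N - 1 \<longrightarrow> x j = x 1"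
      proof
        fix j show "1 \<le> j \<longrightarrow> j \<le> N - 1 \<longrightarrow> x j = x 1"
        proof (induction j)
          case 0
          then show ?case by simp
        next
          case (Suc j)
          show ?case
          proof (cases "j = 0")
            case True
            then show ?thesis by simp
          next
            case False
            show ?thesis
            proof (intro impI)
              assume h: "Suc j \<le> N - 1"
              have jC: "j \<in> C" using False h unfolding C_def by simp
              have j1C: "j + 1 \<in> C" using h unfolding C_def by simp
              have "1 \<le> j" "j \<le> N - 1" using False h by auto
              then have "x j = x 1" using Suc.IH by blast
              then show "x (Suc j) = x 1" using step[OF jC j1C] by simp
            qed
          qed
        qed
      qed
      have "1 = (\<Sum>j\<in>C. u j * p j) / c" using p_ip cpos by simp
      also have "\<dots> = (\<Sum>j\<in>C. u j * v j * x j)"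
        unfolding sum_divide_distrib x_def
      proof (intro sum.cong refl)
        fix j assume j: "j \<in> C"
        show "u j * p j / c = u j * v j * (p j / (v j * c))" using vC[OF j] cpos by simp
      qed
      also have "\<dots> = (\<Sum>j\<in>C. u j * v j) * x 1"
        unfolding sum_distrib_right
      proof (intro sum.cong refl)
        fix j assume j: "j \<in> C"
        have "1 \<le> j" "j \<le> N - 1" using j unfolding C_def by auto
        then have "x j = x 1" using allx by blast
        then show "u j * v j * x j = u j * v j * x 1" by simp
      qed
      finally have x1: "x 1 = 1" using uv_norm C_def by simp
      have pj: "p j = c * v j" if "j \<in> C" for j
      proof -
        have "1 \<le> j" "j \<le> N - 1" using that unfolding C_def by auto
        then have "x j = x 1" using allx by blast
        then have "x j = 1" using x1 by simp
        then show ?thesis using vC[OF that] cpos unfolding x_def by (simp add: field_simps)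
      qed
      have "(\<Sum>i\<in>C. p i) = (\<Sum>i\<in>C. c * v i)" using pj by simp
      also have "\<dots> = c" using v_norm unfolding C_def by (simp add: sum_distrib_left[symmetric])
      finally have sC: "(\<Sum>i\<in>C. p i) = c" .
      have "0 \<notin> insert N C" "N \<notin> C" unfolding C_def using N2 by auto
      then have tot: "p 0 + p N + c = 1" using psum sC finC unfolding dom by simp
      show "p \<in> quasi_stationary N v"
        unfolding quasi_stationary_def
      proof (rule CollectI, rule exI[of _ "p 0"], rule exI[of _ "p N"], rule exI[of _ c], intro conjI ballI)
        fix i assume i: "i \<in> {0..N}"
        show "p i = (if i = 0 then p 0 else 0) + c * vhat N v i + (if i = N then p N else 0)"
        proof (cases "i = 0 \<or> i = N")
          case True
          then show ?thesis using N2 unfolding vhat_def by auto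
        next
          case False
          then have iC: "i \<in> C" using i unfolding C_def by auto
          then have "vhat N v i = v i" unfolding vhat_def C_def by simp
          then show ?thesis using False pj[OF iC] by simp
        qed
      next
        show "0 \<le> p 0" using pnon[of 0] by simp
        show "0 \<le> p N" using pnon[of N] by simp
        show "0 \<le> c" using cpos by simp
        show "p 0 + p N + c = 1" using tot .
      qed
    next
      assume "p \<in> quasi_stationary N v"
      then obtain al be lam where lam: "\<forall>i\<in>{0..N}. p i = (if i = 0 then al else 0) + lam * vhat N v i + (if i = N then be else 0)"
        unfolding quasi_stationary_def by blast
      have pj: "p j = lam * v j" if "j \<in> C" for j
      proof -
        have j: "1 \<le> j" "j \<le> N - 1" using that unfolding C_def by auto
        then have j2: "j \<in> {0..N}" "j \<noteq> 0" "j \<noteq> N" using N2 by auto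
        have "p j = (if j = 0 then al else 0) + lam * vhat N v j + (if j = N then be else 0)"
          using lam j2(1) by blast
        also have "\<dots> = lam * vhat N v j" using j2 by simp
        also have "vhat N v j = v j" unfolding vhat_def using j by simp
        finally show ?thesis .
      qed
      have "c = (\<Sum>j\<in>C. lam * (u j * v j))" unfolding p_ip
        by (intro sum.cong refl) (simp add: pj)
      also have "\<dots> = lam" using uv_norm unfolding C_def by (simp add: sum_distrib_left[symmetric])
      finally have clam: "c = lam" .
      have x1: "x j = 1" if "j \<in> C" for j
      proof -
        have "v j > 0" using vC[OF that] .
        then show ?thesis unfolding x_def pj[OF that] clam[symmetric] using cpos by simp
      qed
      have y1: "y i = 1" if "i \<in> C" for i
      proof -
        have "y i = (\<Sum>j\<in>C. a i j * x j)" using y_eq[OF that] .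
        also have "\<dots> = (\<Sum>j\<in>C. a i j)" by (intro sum.cong refl) (simp add: x1)
        also have "\<dots> = 1" using a_sum[OF that] .
        finally show ?thesis .
      qed
      have "entropy \<phi> N u v q = (\<Sum>i\<in>C. \<phi> (x i) * v i * u i)"
        unfolding Eq by (intro sum.cong refl) (simp add: x1 y1)
      then show "entropy \<phi> N u v (moran_apply N s p) = entropy \<phi> N u v p"
        using Ep q_def by simp
    qed
  qed
qed

end
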